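(* Let $A$ be a finite set and let $(v_{xy})$ be a Llull matrix on $A$ with CLC structure, and let $\xi$ be an admissible order for it (write $x <_\xi y$ when $x$ precedes $y$ in $\xi$). Then for all $x,y,z\in A$ with $x <_\xi y$ and $z\notin\{x,y\}$: $$v_{xz}\ge v_{yz},\qquad v_{zx}\le v_{zy},\qquad t_{xz}\ge t_{yz},\qquad t_{zx}\ge t_{zy}.$$
   Context: A Llull matrix on a finite set $A$ is an assignment to each ordered pair of distinct elements $x\neq y$ of $A$ of a number $v_{xy}\in[0,1]$ such that $v_{xy}+v_{yx}\le 1$. Its turnouts are $t_{xy}=v_{xy}+v_{yx}$ and its margins are $m_{xy}=v_{xy}-v_{yx}$. The matrix has CLC structure if there is a total order $\xi$ on $A$ (called an admissible order) such that, writing $x<_\xi y$ when $x$ precedes $y$ and $x'$ for the element immediately following $x$ in $\xi$ (when it exists): (i) $v_{xy}\ge v_{yx}$ whenever $x<_\xi y$; (ii) $v_{xz}=\max(v_{xy},v_{yz})$ whenever $x<_\xi y<_\xi z$; (iii) $v_{zx}=\min(v_{zy},v_{yx})$ whenever $x<_\xi y<_\xi z$; (iv) $0\le t_{xz}-t_{x'z}\le m_{xx'}$ whenever $x$ has an immediate successor $x'$ and $z\notin\{x,x'\}$. *)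

theory Defs
  imports Complex_Main
begin

definition llull :: "'a set \<Rightarrow> ('a \<Rightarrow> 'a \<Rightarrow> real) \<Rightarrow> bool" where
  "llull A v \<longleftrightarrow> (\<forall>x\<in>A. \<forall>y\<in>A. x \<noteq> y \<longrightarrow>
      0 \<le> v x y \<and> v x y \<le> 1 \<and> v x y + v y x \<le> 1)"

definition turnout :: "('a \<Rightarrow> 'a \<Rightarrow> real) \<Rightarrow> 'a \<Rightarrow> 'a \<Rightarrow> real" where
  "turnout v x y = v x y + v y x"

definition margin :: "('a \<Rightarrow> 'a \<Rightarrow> real) \<Rightarrow> 'a \<Rightarrow> 'a \<Rightarrow> real" where
  "margin v x y = v x y - v y x"

definition strict_total_order_on :: "'a set \<Rightarrow> ('a \<Rightarrow> 'a \<Rightarrow> bool) \<Rightarrow> bool" where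
  "strict_total_order_on A lt \<longleftrightarrow>
     (\<forall>x\<in>A. \<not> lt x x) \<and>
     (\<forall>x\<in>A. \<forall>y\<in>A. \<forall>z\<in>A. lt x y \<and> lt y z \<longrightarrow> lt x z) \<and>
     (\<forall>x\<in>A. \<forall>y\<in>A. x \<noteq> y \<longrightarrow> lt x y \<or> lt y x)"

definition immediate_succ :: "'a set \<Rightarrow> ('a \<Rightarrow> 'a \<Rightarrow> bool) \<Rightarrow> 'a \<Rightarrow> 'a \<Rightarrow> bool" where
  "immediate_succ A lt x x' \<longleftrightarrow> x \<in> A \<and> x' \<in> A \<and> lt x x' \<and>
     \<not> (\<exists>y\<in>A. lt x y \<and> lt y x')"

definition admissible_order :: "'a set \<Rightarrow> ('a \<Rightarrow> 'a \<Rightarrow> real) \<Rightarrow> ('a \<Rightarrow> 'a \<Rightarrow> bool) \<Rightarrow> bool" where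
  "admissible_order A v lt \<longleftrightarrow>
     strict_total_order_on A lt \<and>
     (\<forall>x\<in>A. \<forall>y\<in>A. lt x y \<longrightarrow> v x y \<ge> v y x) \<and>
     (\<forall>x\<in>A. \<forall>y\<in>A. \<forall>z\<in>A. lt x y \<and> lt y z \<longrightarrow> v x z = max (v x y) (v y z)) \<and>
     (\<forall>x\<in>A. \<forall>y\<in>A. \<forall>z\<in>A. lt x y \<and> lt y z \<longrightarrow> v z x = min (v z y) (v y x)) \<and>
     (\<forall>x x' z. immediate_succ A lt x x' \<and> z \<in> A \<and> z \<noteq> x \<and> z \<noteq> x' \<longrightarrow>
        0 \<le> turnout v x z - turnout v x' z \<and>
        turnout v x z - turnout v x' z \<le> margin v x x')"

definition has_CLC :: "'a set \<Rightarrow> ('a \<Rightarrow> 'a \<Rightarrow> real) \<Rightarrow> bool" where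
  "has_CLC A v \<longleftrightarrow> (\<exists>lt. admissible_order A v lt)"

end

theory Submission
  imports Defs
begin

definition ivl :: "'a set \<Rightarrow> ('a \<Rightarrow> 'a \<Rightarrow> bool) \<Rightarrow> 'a \<Rightarrow> 'a \<Rightarrow> 'a set" where
  "ivl A lt x y = {u\<in>A. lt x u \<and> lt u y}"

lemma sto_irr: "strict_total_order_on A lt \<Longrightarrow> x \<in> A \<Longrightarrow> \<not> lt x x"
  by (simp add: strict_total_order_on_def)
lemma sto_trans: "strict_total_order_on A lt \<Longrightarrow> x \<in> A \<Longrightarrow> y \<in> A \<Longrightarrow> z \<in> A \<Longrightarrow> lt x y \<Longrightarrow> lt y z \<Longrightarrow> lt x z"
  unfolding strict_total_order_on_def by blast
lemma sto_total: "strict_total_order_on A lt \<Longrightarrow> x \<in> A \<Longrightarrow> y \<in> A \<Longrightarrow> x \<noteq> y \<Longrightarrow> lt x y \<or> lt y x"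
  unfolding strict_total_order_on_def by blast

lemma adm_i: "admissible_order A v lt \<Longrightarrow> a\<in>A \<Longrightarrow> b\<in>A \<Longrightarrow> lt a b \<Longrightarrow> v a b \<ge> v b a"
proof -
  assume h: "admissible_order A v lt" "a\<in>A" "b\<in>A" "lt a b"
  have H: "\<forall>x\<in>A. \<forall>y\<in>A. lt x y \<longrightarrow> v x y \<ge> v y x"
    using h(1) unfolding admissible_order_def by (elim conjE) assumption
  show ?thesis using H[rule_format, OF h(2,3,4)] .
qed
lemma adm_ii: "admissible_order A v lt \<Longrightarrow> a\<in>A \<Longrightarrow> b\<in>A \<Longrightarrow> c\<in>A \<Longrightarrow> lt a b \<Longrightarrow> lt b c \<Longrightarrow> v a c = max (v a b) (v b c)"
proof -
  assume h: "admissible_order A v lt" "a\<in>A" "b\<in>A" "c\<in>A" "lt a b" "lt b c"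
  have H: "\<forall>x\<in>A. \<forall>y\<in>A. \<forall>z\<in>A. lt x y \<and> lt y z \<longrightarrow> v x z = max (v x y) (v y z)"
    using h(1) unfolding admissible_order_def by (elim conjE) assumption
  show ?thesis using H[rule_format, OF h(2,3,4) conjI[OF h(5,6)]] .
qed
lemma adm_iii: "admissible_order A v lt \<Longrightarrow> a\<in>A \<Longrightarrow> b\<in>A \<Longrightarrow> c\<in>A \<Longrightarrow> lt a b \<Longrightarrow> lt b c \<Longrightarrow> v c a = min (v c b) (v b a)"
proof -
  assume h: "admissible_order A v lt" "a\<in>A" "b\<in>A" "c\<in>A" "lt a b" "lt b c"
  have H: "\<forall>x\<in>A. \<forall>y\<in>A. \<forall>z\<in>A. lt x y \<and> lt y z \<longrightarrow> v z x = min (v z y) (v y x)"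
    using h(1) unfolding admissible_order_def by (elim conjE) assumption
  show ?thesis using H[rule_format, OF h(2,3,4) conjI[OF h(5,6)]] .
qed
lemma adm_iv: "admissible_order A v lt \<Longrightarrow> immediate_succ A lt a b \<Longrightarrow> c \<in> A \<Longrightarrow> c \<noteq> a \<Longrightarrow> c \<noteq> b \<Longrightarrow>
        0 \<le> turnout v a c - turnout v b c \<and> turnout v a c - turnout v b c \<le> margin v a b"
proof -
  assume h: "admissible_order A v lt" "immediate_succ A lt a b" "c \<in> A" "c \<noteq> a" "c \<noteq> b"
  have H: "\<forall>x x' z. immediate_succ A lt x x' \<and> z \<in> A \<and> z \<noteq> x \<and> z \<noteq> x' \<longrightarrow>
        0 \<le> turnout v x z - turnout v x' z \<and>
        turnout v x z - turnout v x' z \<le> margin v x x'"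
    using h(1) unfolding admissible_order_def by (elim conjE) assumption
  show ?thesis using H h(2-5) by blast
qed

lemma turnout_sym: "turnout v x y = turnout v y x"
  by (simp add: turnout_def)

lemma ivl_less:
  assumes fin: "finite A" and sto: "strict_total_order_on A lt"
    and "x \<in> A" "y \<in> A" "u \<in> ivl A lt x y"
  shows "card (ivl A lt x u) < card (ivl A lt x y)" "card (ivl A lt u y) < card (ivl A lt x y)"
proof -
  have fi: "finite (ivl A lt x y)" using fin by (simp add: ivl_def)
  have u: "u \<in> A" "lt x u" "lt u y" using assms(5) by (auto simp: ivl_def)
  have irr: "\<not> lt u u" using sto u by (simp add: strict_total_order_on_def)
  have "ivl A lt x u \<subset> ivl A lt x y"
    using sto_trans[OF sto] u assms(3,4) irr unfolding ivl_def by blast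
  then show "card (ivl A lt x u) < card (ivl A lt x y)" using fi psubset_card_mono by blast
  have "ivl A lt u y \<subset> ivl A lt x y"
    using sto_trans[OF sto] u assms(3,4) irr unfolding ivl_def by blast
  then show "card (ivl A lt u y) < card (ivl A lt x y)" using fi psubset_card_mono by blast
qed

lemma turn_mono:
  assumes fin: "finite A" and adm: "admissible_order A v lt"
  shows "x\<in>A \<Longrightarrow> y\<in>A \<Longrightarrow> w\<in>A \<Longrightarrow> lt x y \<Longrightarrow> w\<noteq>x \<Longrightarrow> w\<noteq>y \<Longrightarrow> turnout v y w \<le> turnout v x w"
proof (induction "card (ivl A lt x y)" arbitrary: x y rule: less_induct)
  case less
  have sto: "strict_total_order_on A lt" using adm by (simp add: admissible_order_def)
  have iv: "\<And>a b c. immediate_succ A lt a b \<Longrightarrow> c \<in> A \<Longrightarrow> c \<noteq> a \<Longrightarrow> c \<noteq> b \<Longrightarrow>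
        0 \<le> turnout v a c - turnout v b c"
    using adm_iv[OF adm] by meson
  show ?case
  proof (cases "\<exists>u \<in> ivl A lt x y. u \<noteq> w")
    case True
    then obtain u where u: "u \<in> ivl A lt x y" "u \<noteq> w" by blast
    have uA: "u \<in> A" "lt x u" "lt u y" using u by (auto simp: ivl_def)
    have "turnout v u w \<le> turnout v x w"
      using less.hyps[OF ivl_less(1)[OF fin sto less.prems(1,2) u(1)]] uA less.prems u by blast
    moreover have "turnout v y w \<le> turnout v u w"
      using less.hyps[OF ivl_less(2)[OF fin sto less.prems(1,2) u(1)]] uA less.prems u by blast
    ultimately show ?thesis by linarith
  next
    case False
    show ?thesis
    proof (cases "w \<in> ivl A lt x y")
      case True
      with False have I: "ivl A lt x y = {w}" by blast
      have w: "lt x w" "lt w y" using True by (auto simp: ivl_def)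
      have s1: "immediate_succ A lt x w"
      proof -
        have "\<not> (\<exists>u\<in>A. lt x u \<and> lt u w)"
        proof
          assume "\<exists>u\<in>A. lt x u \<and> lt u w"
          then obtain u where "u\<in>A" "lt x u" "lt u w" by blast
          moreover then have "lt u y" using sto_trans[OF sto] less.prems w by blast
          ultimately have "u \<in> ivl A lt x y" by (simp add: ivl_def)
          with I \<open>lt u w\<close> sto_irr[OF sto] less.prems show False by auto
        qed
        then show ?thesis unfolding immediate_succ_def using less.prems w by auto
      qed
      have s2: "immediate_succ A lt w y"
      proof -
        have "\<not> (\<exists>u\<in>A. lt w u \<and> lt u y)"
        proof
          assume "\<exists>u\<in>A. lt w u \<and> lt u y"
          then obtain u where "u\<in>A" "lt w u" "lt u y" by blast
          moreover then have "lt x u" using sto_trans[OF sto] less.prems w by blast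
          ultimately have "u \<in> ivl A lt x y" by (simp add: ivl_def)
          with I \<open>lt w u\<close> sto_irr[OF sto] less.prems show False by auto
        qed
        then show ?thesis unfolding immediate_succ_def using less.prems w by auto
      qed
      have xy: "x \<noteq> y" using less.prems sto_irr[OF sto] by auto
      have "0 \<le> turnout v w x - turnout v y x" using iv[OF s2] less.prems xy by auto
      moreover have "0 \<le> turnout v x y - turnout v w y" using iv[OF s1] less.prems xy by auto
      ultimately show ?thesis using turnout_sym[of v] by (metis diff_ge_0_iff_ge order_trans)
    next
      case False2: False
      have I: "ivl A lt x y = {}" using False False2 by (metis ex_in_conv)
      have s: "immediate_succ A lt x y"
        unfolding immediate_succ_def using less.prems I by (auto simp: ivl_def)
      show ?thesis using iv[OF s] less.prems by auto
    qed
  qed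
qed

lemma vzx_mono:
  assumes fin: "finite A" and adm: "admissible_order A v lt"
  shows "x\<in>A \<Longrightarrow> y\<in>A \<Longrightarrow> z\<in>A \<Longrightarrow> lt x z \<Longrightarrow> lt z y \<Longrightarrow> v z x \<le> v z y"
proof (induction "card (ivl A lt x y)" arbitrary: x y rule: less_induct)
  case less
  have sto: "strict_total_order_on A lt" using adm by (simp add: admissible_order_def)
  have i: "\<And>a b. a\<in>A \<Longrightarrow> b\<in>A \<Longrightarrow> lt a b \<Longrightarrow> v a b \<ge> v b a"
    by (fact adm_i[OF adm])
  have ii: "\<And>a b c. a\<in>A \<Longrightarrow> b\<in>A \<Longrightarrow> c\<in>A \<Longrightarrow> lt a b \<Longrightarrow> lt b c \<Longrightarrow> v a c = max (v a b) (v b c)"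
    by (fact adm_ii[OF adm])
  have iii: "\<And>a b c. a\<in>A \<Longrightarrow> b\<in>A \<Longrightarrow> c\<in>A \<Longrightarrow> lt a b \<Longrightarrow> lt b c \<Longrightarrow> v c a = min (v c b) (v b a)"
    by (fact adm_iii[OF adm])
  have iv: "\<And>a b c. immediate_succ A lt a b \<Longrightarrow> c \<in> A \<Longrightarrow> c \<noteq> a \<Longrightarrow> c \<noteq> b \<Longrightarrow>
        turnout v a c - turnout v b c \<le> margin v a b"
    using adm_iv[OF adm] by meson
  have zin: "z \<in> ivl A lt x y" using less.prems by (auto simp: ivl_def)
  show ?case
  proof (cases "\<exists>u \<in> ivl A lt x y. u \<noteq> z")
    case True
    then obtain u where u: "u \<in> ivl A lt x y" "u \<noteq> z" by blast
    have uA: "u \<in> A" "lt x u" "lt u y" using u by (auto simp: ivl_def)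
    have "lt u z \<or> lt z u" using sto_total[OF sto] uA less.prems u by blast
    then show ?thesis
    proof
      assume uz: "lt u z"
      have "v z x \<le> v z u" using iii[OF less.prems(1) uA(1) less.prems(3) uA(2) uz] by simp
      moreover have "v z u \<le> v z y"
        using less.hyps[OF ivl_less(2)[OF fin sto less.prems(1,2) u(1)]] uA less.prems uz by blast
      ultimately show ?thesis by linarith
    next
      assume zu: "lt z u"
      have "v z x \<le> v z u"
        using less.hyps[OF ivl_less(1)[OF fin sto less.prems(1,2) u(1)]] uA less.prems zu by blast
      moreover have "v z u \<le> v z y" using ii[OF less.prems(3) uA(1) less.prems(2) zu uA(3)] by simp
      ultimately show ?thesis by linarith
    qed
  next
    case False
    with zin have I: "ivl A lt x y = {z}" by blast
    have s1: "immediate_succ A lt x z"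
    proof -
      have "\<not> (\<exists>u\<in>A. lt x u \<and> lt u z)"
      proof
        assume "\<exists>u\<in>A. lt x u \<and> lt u z"
        then obtain u where "u\<in>A" "lt x u" "lt u z" by blast
        moreover then have "lt u y" using sto_trans[OF sto] less.prems by blast
        ultimately have "u \<in> ivl A lt x y" by (simp add: ivl_def)
        with I \<open>lt u z\<close> sto_irr[OF sto] less.prems show False by auto
      qed
      then show ?thesis unfolding immediate_succ_def using less.prems by auto
    qed
    have xy: "lt x y" using less.prems sto_trans[OF sto] by blast
    have zx: "z \<noteq> x" "z \<noteq> y" using less.prems sto_irr[OF sto] by auto
    have yx: "y \<noteq> x" using xy sto_irr[OF sto] less.prems by auto
    have c: "turnout v x y - turnout v z y \<le> margin v x z" using iv[OF s1 less.prems(2) yx] zx by auto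
    have a1: "v x y = max (v x z) (v z y)" using ii[OF less.prems(1,3,2,4,5)] .
    have a2: "v y x = min (v y z) (v z x)" using iii[OF less.prems(1,3,2,4,5)] .
    have b1: "v x z \<ge> v z x" using i[OF less.prems(1,3,4)] .
    have b2: "v z y \<ge> v y z" using i[OF less.prems(3,2,5)] .
    show ?thesis
    proof (rule ccontr)
      assume "\<not> ?thesis"
      then have "v z x > v z y" by simp
      with a1 a2 b1 b2 have "v x y = v x z" "v y x = v y z" by auto
      with c b1 show False unfolding turnout_def margin_def using \<open>v z x > v z y\<close> by linarith
    qed
  qed
qed

theorem lemma3p2:
  fixes A :: "'a set" and v :: "'a \<Rightarrow> 'a \<Rightarrow> real" and lt :: "'a \<Rightarrow> 'a \<Rightarrow> bool"
  assumes "finite A"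
    and "llull A v"
    and "has_CLC A v"
    and "admissible_order A v lt"
    and "x \<in> A" and "y \<in> A" and "z \<in> A"
    and "lt x y" and "z \<noteq> x" and "z \<noteq> y"
  shows "v x z \<ge> v y z \<and> v z x \<le> v z y \<and>
         turnout v x z \<ge> turnout v y z \<and> turnout v z x \<ge> turnout v z y"
proof -
  note adm = assms(4)
  have sto: "strict_total_order_on A lt" using adm by (simp add: admissible_order_def)
  have i: "\<And>a b. a\<in>A \<Longrightarrow> b\<in>A \<Longrightarrow> lt a b \<Longrightarrow> v a b \<ge> v b a"
    by (fact adm_i[OF adm])
  have ii: "\<And>a b c. a\<in>A \<Longrightarrow> b\<in>A \<Longrightarrow> c\<in>A \<Longrightarrow> lt a b \<Longrightarrow> lt b c \<Longrightarrow> v a c = max (v a b) (v b c)"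
    by (fact adm_ii[OF adm])
  have iii: "\<And>a b c. a\<in>A \<Longrightarrow> b\<in>A \<Longrightarrow> c\<in>A \<Longrightarrow> lt a b \<Longrightarrow> lt b c \<Longrightarrow> v c a = min (v c b) (v b a)"
    by (fact adm_iii[OF adm])
  have T: "turnout v y z \<le> turnout v x z"
    using turn_mono[OF assms(1) adm assms(5,6,7,8,9,10)] .
  have T2: "turnout v z y \<le> turnout v z x" using T turnout_sym[of v] by metis
  have cases: "lt z x \<or> (lt x z \<and> lt z y) \<or> lt y z"
    using sto_total[OF sto assms(7,5,9)] sto_total[OF sto assms(7,6,10)] by blast
  have V: "v x z \<ge> v y z \<and> v z x \<le> v z y"
    using cases
  proof (elim disjE conjE)
    assume zx: "lt z x"
    show ?thesis using ii[OF assms(7,5,6) zx assms(8)] iii[OF assms(7,5,6) zx assms(8)] by simp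
  next
    assume xz: "lt x z" and zy: "lt z y"
    have "v z x \<le> v z y" using vzx_mono[OF assms(1) adm assms(5,6,7) xz zy] .
    moreover have "v x z \<ge> v z x" using i[OF assms(5,7) xz] .
    moreover have "v z y \<ge> v y z" using i[OF assms(7,6) zy] .
    ultimately show ?thesis using T unfolding turnout_def by linarith
  next
    assume yz: "lt y z"
    show ?thesis using ii[OF assms(5,6,7) assms(8) yz] iii[OF assms(5,6,7) assms(8) yz] by simp
  qed
  show ?thesis using V T T2 by simp
qed

end
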